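(* Let $\Omega\subseteq\mathbb{R}^n$ be open and let $f\in\mathbb{A}(\Omega)$. Then: (i) for every dense subset $D$ of $\Omega$ the function $F(D,\Omega,f)$ is S-continuous; (ii) the function $G(f)=[I(S(I(f))),S(I(S(f)))]$ is D-continuous; (iii) both functions $F(S(I(f)))$ and $F(I(S(f)))$ are H-continuous and $F(S(I(f)))\le F(I(S(f)))$.
   Context: $\overline{\mathbb{R}}=\mathbb{R}\cup\{\pm\infty\}$ and $\mathbb{I}\overline{\mathbb{R}}=\{[\underline a,\overline a]:\underline a,\overline a\in\overline{\mathbb{R}},\ \underline a\le\overline a\}$, with $a\in\overline{\mathbb{R}}$ identified with $[a,a]$; extended-real-valued functions are thus regarded as interval functions. $\mathbb{A}(\Omega)$ is the set of all functions $f:\Omega\to\mathbb{I}\overline{\mathbb{R}}$, written $f=[\underline f,\overline f]$. $B_\delta(x)=\{y\in\Omega:\|x-y\|<\delta\}$. For a dense subset $D\subseteq\Omega$ and $f\in\mathbb{A}(D)$ define $I(D,\Omega,f)(x)=\sup_{\delta>0}\inf\{z\in f(y):y\in B_\delta(x)\cap D\}$, $S(D,\Omega,f)(x)=\inf_{\delta>0}\sup\{z\in f(y):y\in B_\delta(x)\cap D\}$, and $F(D,\Omega,f)(x)=[I(D,\Omega,f)(x),S(D,\Omega,f)(x)]$; when $D=\Omega$ write $I(f),S(f),F(f)$ (for $f\in\mathbb{A}(\Omega)$, $F(D,\Omega,f)$ uses the restriction of $f$ to $D$). The order on intervals is $[\underline a,\overline a]\le[\underline b,\overline b]$ iff $\underline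 a\le\underline b$ and $\overline a\le\overline b$, and $f\le g$ means $f(x)\le g(x)$ for all $x\in\Omega$. A function $f\in\mathbb{A}(\Omega)$ is S-continuous if $F(f)=f$; D-continuous if $F(D,\Omega,f)=f$ for every dense subset $D$ of $\Omega$; H-continuous if for every $g\in\mathbb{A}(\Omega)$ with $g(x)\subseteq f(x)$ for all $x$ one has $F(g)=f$. *)

theory Defs
  imports "HOL-Analysis.Analysis"
begin

text \<open>Intervals [a,b] of extended reals are represented as pairs (a,b) with a \<le> b.
  An interval function on \<Omega> is a map into ereal \<times> ereal; only its values on \<Omega> matter.\<close>

definition IA :: "'a::real_normed_vector set \<Rightarrow> ('a \<Rightarrow> ereal \<times> ereal) set" where
  "IA \<Omega> = {f. \<forall>x\<in>\<Omega>. fst (f x) \<le> snd (f x)}"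

definition Bd :: "'a::real_normed_vector set \<Rightarrow> real \<Rightarrow> 'a \<Rightarrow> 'a set" where
  "Bd \<Omega> \<delta> x = {y\<in>\<Omega>. norm (x - y) < \<delta>}"

definition dense_subset :: "'a::real_normed_vector set \<Rightarrow> 'a set \<Rightarrow> bool" where
  "dense_subset D \<Omega> \<longleftrightarrow> D \<subseteq> \<Omega> \<and> \<Omega> \<subseteq> closure D"

definition Ilow :: "'a::real_normed_vector set \<Rightarrow> 'a set \<Rightarrow> ('a \<Rightarrow> ereal \<times> ereal) \<Rightarrow> 'a \<Rightarrow> ereal" where
  "Ilow D \<Omega> f x = (SUP \<delta>\<in>{0<..}. Inf {z. \<exists>y\<in>Bd \<Omega> \<delta> x \<inter> D. fst (f y) \<le> z \<and> z \<le> snd (f y)})"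

definition Supp :: "'a::real_normed_vector set \<Rightarrow> 'a set \<Rightarrow> ('a \<Rightarrow> ereal \<times> ereal) \<Rightarrow> 'a \<Rightarrow> ereal" where
  "Supp D \<Omega> f x = (INF \<delta>\<in>{0<..}. Sup {z. \<exists>y\<in>Bd \<Omega> \<delta> x \<inter> D. fst (f y) \<le> z \<and> z \<le> snd (f y)})"

definition Fenv :: "'a::real_normed_vector set \<Rightarrow> 'a set \<Rightarrow> ('a \<Rightarrow> ereal \<times> ereal) \<Rightarrow> 'a \<Rightarrow> ereal \<times> ereal" where
  "Fenv D \<Omega> f x = (Ilow D \<Omega> f x, Supp D \<Omega> f x)"

definition deg :: "('a \<Rightarrow> ereal) \<Rightarrow> 'a \<Rightarrow> ereal \<times> ereal" where
  "deg g = (\<lambda>x. (g x, g x))"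

definition ile :: "'a set \<Rightarrow> ('a \<Rightarrow> ereal \<times> ereal) \<Rightarrow> ('a \<Rightarrow> ereal \<times> ereal) \<Rightarrow> bool" where
  "ile \<Omega> f g \<longleftrightarrow> (\<forall>x\<in>\<Omega>. fst (f x) \<le> fst (g x) \<and> snd (f x) \<le> snd (g x))"

definition S_continuous :: "'a::real_normed_vector set \<Rightarrow> ('a \<Rightarrow> ereal \<times> ereal) \<Rightarrow> bool" where
  "S_continuous \<Omega> f \<longleftrightarrow> f \<in> IA \<Omega> \<and> (\<forall>x\<in>\<Omega>. Fenv \<Omega> \<Omega> f x = f x)"

definition D_continuous :: "'a::real_normed_vector set \<Rightarrow> ('a \<Rightarrow> ereal \<times> ereal) \<Rightarrow> bool" where
  "D_continuous \<Omega> f \<longleftrightarrow> f \<in> IA \<Omega> \<and>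
     (\<forall>D. dense_subset D \<Omega> \<longrightarrow> (\<forall>x\<in>\<Omega>. Fenv D \<Omega> f x = f x))"

definition H_continuous :: "'a::real_normed_vector set \<Rightarrow> ('a \<Rightarrow> ereal \<times> ereal) \<Rightarrow> bool" where
  "H_continuous \<Omega> f \<longleftrightarrow> f \<in> IA \<Omega> \<and>
     (\<forall>g\<in>IA \<Omega>. (\<forall>x\<in>\<Omega>. fst (f x) \<le> fst (g x) \<and> snd (g x) \<le> snd (f x))
        \<longrightarrow> (\<forall>x\<in>\<Omega>. Fenv \<Omega> \<Omega> g x = f x))"

end

theory Submission imports Defs begin

definition Il :: "'a::real_normed_vector set \<Rightarrow> 'a set \<Rightarrow> ('a \<Rightarrow> ereal) \<Rightarrow> 'a \<Rightarrow> ereal" where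
  "Il \<Omega> D g x = (SUP \<delta>\<in>{0<..}. INF y\<in>Bd \<Omega> \<delta> x \<inter> D. g y)"

definition Su :: "'a::real_normed_vector set \<Rightarrow> 'a set \<Rightarrow> ('a \<Rightarrow> ereal) \<Rightarrow> 'a \<Rightarrow> ereal" where
  "Su \<Omega> D g x = (INF \<delta>\<in>{0<..}. SUP y\<in>Bd \<Omega> \<delta> x \<inter> D. g y)"

lemma Inf_intervals:
  fixes f :: "'a \<Rightarrow> ereal \<times> ereal"
  assumes "\<forall>y\<in>A. fst (f y) \<le> snd (f y)"
  shows "Inf {z. \<exists>y\<in>A. fst (f y) \<le> z \<and> z \<le> snd (f y)} = (INF y\<in>A. fst (f y))"
proof (rule antisym)
  show "Inf {z. \<exists>y\<in>A. fst (f y) \<le> z \<and> z \<le> snd (f y)} \<le> (INF y\<in>A. fst (f y))"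
    by (rule INF_greatest, rule Inf_lower) (use assms in auto)
  show "(INF y\<in>A. fst (f y)) \<le> Inf {z. \<exists>y\<in>A. fst (f y) \<le> z \<and> z \<le> snd (f y)}"
    by (rule Inf_greatest) (auto intro: INF_lower2)
qed

lemma Sup_intervals:
  fixes f :: "'a \<Rightarrow> ereal \<times> ereal"
  assumes "\<forall>y\<in>A. fst (f y) \<le> snd (f y)"
  shows "Sup {z. \<exists>y\<in>A. fst (f y) \<le> z \<and> z \<le> snd (f y)} = (SUP y\<in>A. snd (f y))"
proof (rule antisym)
  show "(SUP y\<in>A. snd (f y)) \<le> Sup {z. \<exists>y\<in>A. fst (f y) \<le> z \<and> z \<le> snd (f y)}"
    by (rule SUP_least, rule Sup_upper) (use assms in auto)
  show "Sup {z. \<exists>y\<in>A. fst (f y) \<le> z \<and> z \<le> snd (f y)} \<le> (SUP y\<in>A. snd (f y))"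
    by (rule Sup_least) (auto intro: SUP_upper2)
qed

lemma Bd_sub: "Bd \<Omega> \<delta> x \<subseteq> \<Omega>" by (auto simp: Bd_def)

lemma Ilow_eq:
  assumes "f \<in> IA \<Omega>"
  shows "Ilow D \<Omega> f x = Il \<Omega> D (\<lambda>y. fst (f y)) x"
  unfolding Ilow_def Il_def
  by (rule SUP_cong[OF refl], rule Inf_intervals) (use assms in \<open>auto simp: IA_def Bd_def\<close>)

lemma Supp_eq:
  assumes "f \<in> IA \<Omega>"
  shows "Supp D \<Omega> f x = Su \<Omega> D (\<lambda>y. snd (f y)) x"
  unfolding Supp_def Su_def
  by (rule INF_cong[OF refl], rule Sup_intervals) (use assms in \<open>auto simp: IA_def Bd_def\<close>)

lemma deg_IA: "deg g \<in> IA \<Omega>" by (simp add: deg_def IA_def)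

lemma Ilow_deg: "Ilow D \<Omega> (deg g) = Il \<Omega> D g"
  by (rule ext, subst Ilow_eq[OF deg_IA]) (simp add: deg_def)

lemma Supp_deg: "Supp D \<Omega> (deg g) = Su \<Omega> D g"
  by (rule ext, subst Supp_eq[OF deg_IA]) (simp add: deg_def)

lemma Su_dual: "Su \<Omega> D g x = - Il \<Omega> D (\<lambda>y. - g y) x"
  unfolding Su_def Il_def
  by (simp add: ereal_INF_uminus_eq[symmetric] ereal_SUP_uminus_eq[symmetric])

lemma Il_le: "x \<in> \<Omega> \<Longrightarrow> x \<in> D \<Longrightarrow> Il \<Omega> D g x \<le> g x"
  unfolding Il_def by (rule SUP_least, rule INF_lower2[of x]) (auto simp: Bd_def)

lemma Il_mono: "(\<And>y. y \<in> \<Omega> \<Longrightarrow> y \<in> D \<Longrightarrow> g y \<le> h y) \<Longrightarrow> Il \<Omega> D g x \<le> Il \<Omega> D h x"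
  unfolding Il_def by (rule SUP_mono, rule bexI, rule INF_mono) (auto simp: Bd_def)

lemma Il_sub: "D \<subseteq> \<Omega> \<Longrightarrow> Il \<Omega> \<Omega> g x \<le> Il \<Omega> D g x"
  unfolding Il_def by (rule SUP_mono, rule bexI, rule INF_superset_mono) (auto simp: Bd_def)

lemma Bd_half: "y \<in> Bd \<Omega> (\<delta>/2) x \<Longrightarrow> Bd \<Omega> (\<delta>/2) y \<subseteq> Bd \<Omega> \<delta> x"
  unfolding Bd_def
proof safe
  fix z assume "y \<in> \<Omega>" "norm (x - y) < \<delta>/2" "z \<in> \<Omega>" "norm (y - z) < \<delta>/2"
  then show "norm (x - z) < \<delta>" using norm_triangle_ineq[of "x-y" "y-z"] by simp
qed

lemma Il_idem:
  assumes "x \<in> \<Omega>"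
  shows "Il \<Omega> \<Omega> (Il \<Omega> D g) x = Il \<Omega> D g x"
proof (rule antisym)
  show "Il \<Omega> \<Omega> (Il \<Omega> D g) x \<le> Il \<Omega> D g x" using assms by (intro Il_le assms)
  show "Il \<Omega> D g x \<le> Il \<Omega> \<Omega> (Il \<Omega> D g) x"
    unfolding Il_def[of \<Omega> D g x]
  proof (rule SUP_least)
    fix \<delta> :: real assume d: "\<delta> \<in> {0<..}"
    have "(INF y\<in>Bd \<Omega> \<delta> x \<inter> D. g y) \<le> (INF y\<in>Bd \<Omega> (\<delta>/2) x \<inter> \<Omega>. Il \<Omega> D g y)"
    proof (rule INF_greatest)
      fix y assume y: "y \<in> Bd \<Omega> (\<delta>/2) x \<inter> \<Omega>"
      have "(INF y\<in>Bd \<Omega> \<delta> x \<inter> D. g y) \<le> (INF y\<in>Bd \<Omega> (\<delta>/2) y \<inter> D. g y)"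
        by (rule INF_superset_mono) (use Bd_half[of y \<Omega> \<delta> x] y in auto)
      also have "\<dots> \<le> Il \<Omega> D g y"
        unfolding Il_def by (rule SUP_upper) (use d in auto)
      finally show "(INF y\<in>Bd \<Omega> \<delta> x \<inter> D. g y) \<le> Il \<Omega> D g y" .
    qed
    also have "\<dots> \<le> Il \<Omega> \<Omega> (Il \<Omega> D g) x"
      unfolding Il_def[of \<Omega> \<Omega> "Il \<Omega> D g" x] by (rule SUP_upper) (use d in auto)
    finally show "(INF y\<in>Bd \<Omega> \<delta> x \<inter> D. g y) \<le> Il \<Omega> \<Omega> (Il \<Omega> D g) x" .
  qed
qed

lemma dense_pt:
  assumes "dense_subset D \<Omega>" "z \<in> \<Omega>" "e > 0"
  obtains y where "y \<in> D" "y \<in> \<Omega>" "norm (z - y) < e"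
proof -
  have "z \<in> closure D" using assms unfolding dense_subset_def by auto
  then obtain y where "y \<in> D" "dist y z < e" using assms(3) closure_approachable by blast
  then show ?thesis using that assms(1) unfolding dense_subset_def by (auto simp: dist_norm norm_minus_commute)
qed

lemma Il_Su_le:
  assumes "dense_subset D \<Omega>" "x \<in> \<Omega>" "\<And>y. y \<in> D \<Longrightarrow> g y \<le> h y"
  shows "Il \<Omega> D g x \<le> Su \<Omega> D h x"
  unfolding Il_def Su_def
proof (rule SUP_least, rule INF_greatest)
  fix d d' :: real assume "d \<in> {0<..}" "d' \<in> {0<..}"
  then obtain y where y: "y \<in> D" "y \<in> \<Omega>" "norm (x - y) < min d d'"
    using dense_pt[OF assms(1,2), of "min d d'"] by auto
  have "(INF y\<in>Bd \<Omega> d x \<inter> D. g y) \<le> g y" by (rule INF_lower) (use y in \<open>auto simp: Bd_def\<close>)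
  also have "\<dots> \<le> h y" using assms(3) y by auto
  also have "\<dots> \<le> (SUP y\<in>Bd \<Omega> d' x \<inter> D. h y)" by (rule SUP_upper) (use y in \<open>auto simp: Bd_def\<close>)
  finally show "(INF y\<in>Bd \<Omega> d x \<inter> D. g y) \<le> (SUP y\<in>Bd \<Omega> d' x \<inter> D. h y)" .
qed

lemma Il_dense:
  assumes D: "dense_subset D \<Omega>" and x: "x \<in> \<Omega>" and usc: "\<And>z. z \<in> \<Omega> \<Longrightarrow> Su \<Omega> \<Omega> \<psi> z \<le> \<psi> z"
  shows "Il \<Omega> D (Il \<Omega> \<Omega> \<psi>) x = Il \<Omega> \<Omega> \<psi> x"
proof (rule antisym)
  have DO: "D \<subseteq> \<Omega>" using D by (simp add: dense_subset_def)
  show "Il \<Omega> \<Omega> \<psi> x \<le> Il \<Omega> D (Il \<Omega> \<Omega> \<psi>) x"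
    using Il_sub[OF DO, of "Il \<Omega> \<Omega> \<psi>" x] Il_idem[OF x, of \<Omega> \<psi>] by simp
  show "Il \<Omega> D (Il \<Omega> \<Omega> \<psi>) x \<le> Il \<Omega> \<Omega> \<psi> x"
    unfolding Il_def[of \<Omega> D]
  proof (rule SUP_least)
    fix \<delta> :: real assume d: "\<delta> \<in> {0<..}"
    have "(INF y\<in>Bd \<Omega> \<delta> x \<inter> D. Il \<Omega> \<Omega> \<psi> y) \<le> (INF z\<in>Bd \<Omega> (\<delta>/2) x \<inter> \<Omega>. \<psi> z)"
    proof (rule INF_greatest)
      fix z assume z: "z \<in> Bd \<Omega> (\<delta>/2) x \<inter> \<Omega>"
      show "(INF y\<in>Bd \<Omega> \<delta> x \<inter> D. Il \<Omega> \<Omega> \<psi> y) \<le> \<psi> z"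
      proof (rule dense_ge)
        fix t assume "\<psi> z < t"
        then have "Su \<Omega> \<Omega> \<psi> z < t" using usc z by (meson le_less_trans IntD2)
        then obtain e where e: "e > 0" "(SUP y\<in>Bd \<Omega> e z \<inter> \<Omega>. \<psi> y) < t"
          unfolding Su_def by (auto simp: INF_less_iff)
        obtain y where y: "y \<in> D" "y \<in> \<Omega>" "norm (z - y) < min e (\<delta>/2)"
          using dense_pt[OF D, of z "min e (\<delta>/2)"] z d e by auto
        have yb: "y \<in> Bd \<Omega> \<delta> x"
          using Bd_half[of z \<Omega> \<delta> x] z y by (auto simp: Bd_def)
        have "(INF y\<in>Bd \<Omega> \<delta> x \<inter> D. Il \<Omega> \<Omega> \<psi> y) \<le> Il \<Omega> \<Omega> \<psi> y"
          by (rule INF_lower) (use y yb in auto)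
        also have "\<dots> \<le> \<psi> y" using y by (intro Il_le) auto
        also have "\<dots> \<le> (SUP y\<in>Bd \<Omega> e z \<inter> \<Omega>. \<psi> y)"
          by (rule SUP_upper) (use y in \<open>auto simp: Bd_def\<close>)
        finally show "(INF y\<in>Bd \<Omega> \<delta> x \<inter> D. Il \<Omega> \<Omega> \<psi> y) \<le> t" using e by simp
      qed
    qed
    also have "\<dots> \<le> Il \<Omega> \<Omega> \<psi> x"
      unfolding Il_def by (rule SUP_upper) (use d in auto)
    finally show "(INF y\<in>Bd \<Omega> \<delta> x \<inter> D. Il \<Omega> \<Omega> \<psi> y) \<le> Il \<Omega> \<Omega> \<psi> x" .
  qed
qed

lemma Su_ge: "x \<in> \<Omega> \<Longrightarrow> x \<in> D \<Longrightarrow> g x \<le> Su \<Omega> D g x"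
  using Il_le[of x \<Omega> D "\<lambda>y. - g y"] unfolding Su_dual by (metis ereal_minus_le_minus ereal_uminus_uminus)

lemma Su_mono: "(\<And>y. y \<in> \<Omega> \<Longrightarrow> y \<in> D \<Longrightarrow> g y \<le> h y) \<Longrightarrow> Su \<Omega> D g x \<le> Su \<Omega> D h x"
  using Il_mono[of \<Omega> D "\<lambda>y. - h y" "\<lambda>y. - g y" x] by (simp add: Su_dual)

lemma Su_idem:
  assumes "x \<in> \<Omega>"
  shows "Su \<Omega> \<Omega> (Su \<Omega> D g) x = Su \<Omega> D g x"
proof -
  have "(\<lambda>y. - Su \<Omega> D g y) = Il \<Omega> D (\<lambda>y. - g y)" by (simp add: Su_dual fun_eq_iff)
  then show ?thesis using Il_idem[OF assms, of D "\<lambda>y. - g y"] by (simp add: Su_dual[of \<Omega> \<Omega>] Su_dual[of \<Omega> D g x])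
qed

lemma Su_dense:
  assumes D: "dense_subset D \<Omega>" and x: "x \<in> \<Omega>" and lsc: "\<And>z. z \<in> \<Omega> \<Longrightarrow> cc z \<le> Il \<Omega> \<Omega> cc z"
  shows "Su \<Omega> D (Su \<Omega> \<Omega> cc) x = Su \<Omega> \<Omega> cc x"
proof -
  have u: "Su \<Omega> \<Omega> (\<lambda>y. - cc y) z \<le> - cc z" if "z \<in> \<Omega>" for z
    using lsc[OF that] by (simp add: Su_dual)
  have e: "(\<lambda>y. - Su \<Omega> \<Omega> cc y) = Il \<Omega> \<Omega> (\<lambda>y. - cc y)" by (simp add: Su_dual fun_eq_iff)
  show ?thesis using Il_dense[OF D x u] by (simp add: Su_dual[of \<Omega> D] Su_dual[of \<Omega> \<Omega> cc x] e)
qed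

lemma Fenv_eq: "g \<in> IA \<Omega> \<Longrightarrow> Fenv D \<Omega> g x = (Il \<Omega> D (\<lambda>y. fst (g y)) x, Su \<Omega> D (\<lambda>y. snd (g y)) x)"
  by (simp add: Fenv_def Ilow_eq Supp_eq)

lemma Fenv_deg: "Fenv D \<Omega> (deg h) = (\<lambda>x. (Il \<Omega> D h x, Su \<Omega> D h x))"
  by (simp add: Fenv_def Ilow_deg Supp_deg fun_eq_iff)

theorem theorem2:
  fixes \<Omega> :: "(real ^ 'n) set" and f :: "real ^ 'n \<Rightarrow> ereal \<times> ereal"
  assumes "open \<Omega>" and "f \<in> IA \<Omega>"
  shows "(\<forall>D. dense_subset D \<Omega> \<longrightarrow> S_continuous \<Omega> (Fenv D \<Omega> f))
    \<and> D_continuous \<Omega>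
        (\<lambda>x. (Ilow \<Omega> \<Omega> (deg (Supp \<Omega> \<Omega> (deg (Ilow \<Omega> \<Omega> f)))) x,
              Supp \<Omega> \<Omega> (deg (Ilow \<Omega> \<Omega> (deg (Supp \<Omega> \<Omega> f)))) x))
    \<and> H_continuous \<Omega> (Fenv \<Omega> \<Omega> (deg (Supp \<Omega> \<Omega> (deg (Ilow \<Omega> \<Omega> f)))))
    \<and> H_continuous \<Omega> (Fenv \<Omega> \<Omega> (deg (Ilow \<Omega> \<Omega> (deg (Supp \<Omega> \<Omega> f)))))
    \<and> ile \<Omega> (Fenv \<Omega> \<Omega> (deg (Supp \<Omega> \<Omega> (deg (Ilow \<Omega> \<Omega> f)))))
             (Fenv \<Omega> \<Omega> (deg (Ilow \<Omega> \<Omega> (deg (Supp \<Omega> \<Omega> f)))))"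
proof -
  define f1 where "f1 = (\<lambda>y. fst (f y))"
  define f2 where "f2 = (\<lambda>y. snd (f y))"
  define a where "a = Il \<Omega> \<Omega> f1"
  define b where "b = Su \<Omega> \<Omega> f2"
  have f12: "f1 y \<le> f2 y" if "y \<in> \<Omega>" for y using assms(2) that by (simp add: IA_def f1_def f2_def)
  have Ia: "Ilow \<Omega> \<Omega> f = a" by (simp add: fun_eq_iff Ilow_eq[OF assms(2)] a_def f1_def)
  have Sb: "Supp \<Omega> \<Omega> f = b" by (simp add: fun_eq_iff Supp_eq[OF assms(2)] b_def f2_def)
  have a_le: "a x \<le> f1 x" if "x \<in> \<Omega>" for x unfolding a_def by (intro Il_le that)
  have b_ge: "f2 x \<le> b x" if "x \<in> \<Omega>" for x unfolding b_def by (intro Su_ge that)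
  have aa: "Il \<Omega> \<Omega> a x = a x" if "x \<in> \<Omega>" for x unfolding a_def by (rule Il_idem[OF that])
  have bb: "Su \<Omega> \<Omega> b x = b x" if "x \<in> \<Omega>" for x unfolding b_def by (rule Su_idem[OF that])
  have IleS: "Il \<Omega> \<Omega> h x \<le> Su \<Omega> \<Omega> h x" if "x \<in> \<Omega>" for h x
    using Il_le[OF that that, of h] Su_ge[OF that that, of h] by simp
  have Sa_le_b: "Su \<Omega> \<Omega> a x \<le> b x" if "x \<in> \<Omega>" for x
  proof -
    have "Su \<Omega> \<Omega> a x \<le> Su \<Omega> \<Omega> b x"
      by (rule Su_mono) (use a_le b_ge f12 in \<open>meson order_trans\<close>)
    then show ?thesis using bb[OF that] by simp
  qed
  have a_le_Ib: "a x \<le> Il \<Omega> \<Omega> b x" if "x \<in> \<Omega>" for x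
  proof -
    have "Il \<Omega> \<Omega> a x \<le> Il \<Omega> \<Omega> b x"
      by (rule Il_mono) (use a_le b_ge f12 in \<open>meson order_trans\<close>)
    then show ?thesis using aa[OF that] by simp
  qed
  have ISa_le_Ib: "Il \<Omega> \<Omega> (Su \<Omega> \<Omega> a) x \<le> Il \<Omega> \<Omega> b x" if "x \<in> \<Omega>" for x
    by (rule Il_mono) (rule Sa_le_b)
  have Sa_le_SIb: "Su \<Omega> \<Omega> a x \<le> Su \<Omega> \<Omega> (Il \<Omega> \<Omega> b) x" if "x \<in> \<Omega>" for x
    by (rule Su_mono) (rule a_le_Ib)
  have SISa: "Su \<Omega> \<Omega> (Il \<Omega> \<Omega> (Su \<Omega> \<Omega> a)) x = Su \<Omega> \<Omega> a x" if "x \<in> \<Omega>" for x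
  proof (rule antisym)
    have "Su \<Omega> \<Omega> (Il \<Omega> \<Omega> (Su \<Omega> \<Omega> a)) x \<le> Su \<Omega> \<Omega> (Su \<Omega> \<Omega> a) x"
      by (rule Su_mono) (intro Il_le)
    then show "Su \<Omega> \<Omega> (Il \<Omega> \<Omega> (Su \<Omega> \<Omega> a)) x \<le> Su \<Omega> \<Omega> a x" using Su_idem[OF that] by simp
    have "a y \<le> Il \<Omega> \<Omega> (Su \<Omega> \<Omega> a) y" if "y \<in> \<Omega>" for y
    proof -
      have "Il \<Omega> \<Omega> a y \<le> Il \<Omega> \<Omega> (Su \<Omega> \<Omega> a) y" by (rule Il_mono) (intro Su_ge)
      then show ?thesis using aa[OF that] by simp
    qed
    then show "Su \<Omega> \<Omega> a x \<le> Su \<Omega> \<Omega> (Il \<Omega> \<Omega> (Su \<Omega> \<Omega> a)) x" by (rule Su_mono)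
  qed
  have ISIb: "Il \<Omega> \<Omega> (Su \<Omega> \<Omega> (Il \<Omega> \<Omega> b)) x = Il \<Omega> \<Omega> b x" if "x \<in> \<Omega>" for x
  proof (rule antisym)
    have "Il \<Omega> \<Omega> (Il \<Omega> \<Omega> b) x \<le> Il \<Omega> \<Omega> (Su \<Omega> \<Omega> (Il \<Omega> \<Omega> b)) x"
      by (rule Il_mono) (intro Su_ge)
    then show "Il \<Omega> \<Omega> b x \<le> Il \<Omega> \<Omega> (Su \<Omega> \<Omega> (Il \<Omega> \<Omega> b)) x" using Il_idem[OF that] by simp
    have "Su \<Omega> \<Omega> (Il \<Omega> \<Omega> b) y \<le> b y" if "y \<in> \<Omega>" for y
    proof -
      have "Su \<Omega> \<Omega> (Il \<Omega> \<Omega> b) y \<le> Su \<Omega> \<Omega> b y" by (rule Su_mono) (intro Il_le)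
      then show ?thesis using bb[OF that] by simp
    qed
    then show "Il \<Omega> \<Omega> (Su \<Omega> \<Omega> (Il \<Omega> \<Omega> b)) x \<le> Il \<Omega> \<Omega> b x" by (rule Il_mono)
  qed
  have P1: "\<forall>D. dense_subset D \<Omega> \<longrightarrow> S_continuous \<Omega> (Fenv D \<Omega> f)"
  proof (intro allI impI)
    fix D assume D: "dense_subset D \<Omega>"
    have DO: "D \<subseteq> \<Omega>" using D by (simp add: dense_subset_def)
    have FD: "Fenv D \<Omega> f = (\<lambda>x. (Il \<Omega> D f1 x, Su \<Omega> D f2 x))"
      by (simp add: fun_eq_iff Fenv_eq[OF assms(2)] f1_def f2_def)
    have IA: "Fenv D \<Omega> f \<in> IA \<Omega>"
      unfolding FD IA_def using Il_Su_le[OF D, of _ f1 f2] f12 DO by (simp add: subset_iff)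
    show "S_continuous \<Omega> (Fenv D \<Omega> f)"
      unfolding S_continuous_def
    proof (intro conjI IA ballI)
      fix x assume x: "x \<in> \<Omega>"
      show "Fenv \<Omega> \<Omega> (Fenv D \<Omega> f) x = Fenv D \<Omega> f x"
        using Fenv_eq[OF IA, of \<Omega> x] Il_idem[OF x] Su_idem[OF x] by (simp add: FD)
    qed
  qed
  have P2: "D_continuous \<Omega> (\<lambda>x. (Il \<Omega> \<Omega> (Su \<Omega> \<Omega> a) x, Su \<Omega> \<Omega> (Il \<Omega> \<Omega> b) x))"
    (is "D_continuous \<Omega> ?G")
  proof -
    have IA: "?G \<in> IA \<Omega>" unfolding IA_def
      using ISa_le_Ib Su_ge[of _ \<Omega> \<Omega> "Il \<Omega> \<Omega> b"] by (auto intro: order_trans)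
    show ?thesis unfolding D_continuous_def
    proof (intro conjI IA allI impI ballI)
      fix D x assume D: "dense_subset D \<Omega>" and x: "x \<in> \<Omega>"
      have u: "Su \<Omega> \<Omega> (Su \<Omega> \<Omega> a) z \<le> Su \<Omega> \<Omega> a z" if "z \<in> \<Omega>" for z using Su_idem[OF that] by simp
      have l: "Il \<Omega> \<Omega> b z \<le> Il \<Omega> \<Omega> (Il \<Omega> \<Omega> b) z" if "z \<in> \<Omega>" for z using Il_idem[OF that] by simp
      show "Fenv D \<Omega> ?G x = ?G x"
        using Fenv_eq[OF IA, of D x] Il_dense[OF D x u] Su_dense[OF D x l] by simp
    qed
  qed
  have P3: "H_continuous \<Omega> (Fenv \<Omega> \<Omega> (deg (Su \<Omega> \<Omega> a)))"
    unfolding H_continuous_def Fenv_deg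
  proof (intro conjI ballI impI)
    show "(\<lambda>x. (Il \<Omega> \<Omega> (Su \<Omega> \<Omega> a) x, Su \<Omega> \<Omega> (Su \<Omega> \<Omega> a) x)) \<in> IA \<Omega>"
      unfolding IA_def using IleS by auto
    fix g x assume g: "g \<in> IA \<Omega>" and
      h: "\<forall>x\<in>\<Omega>. fst (Il \<Omega> \<Omega> (Su \<Omega> \<Omega> a) x, Su \<Omega> \<Omega> (Su \<Omega> \<Omega> a) x) \<le> fst (g x) \<and>
           snd (g x) \<le> snd (Il \<Omega> \<Omega> (Su \<Omega> \<Omega> a) x, Su \<Omega> \<Omega> (Su \<Omega> \<Omega> a) x)"
      and x: "x \<in> \<Omega>"
    have g12: "fst (g y) \<le> snd (g y)" if "y \<in> \<Omega>" for y using g that by (simp add: IA_def)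
    have h1: "Il \<Omega> \<Omega> (Su \<Omega> \<Omega> a) y \<le> fst (g y)" if "y \<in> \<Omega>" for y using h that by simp
    have h2: "snd (g y) \<le> Su \<Omega> \<Omega> a y" if "y \<in> \<Omega>" for y using h[rule_format, OF that] Su_idem[OF that, of \<Omega> a] by simp
    have "Il \<Omega> \<Omega> (\<lambda>y. fst (g y)) x \<le> Il \<Omega> \<Omega> (Su \<Omega> \<Omega> a) x"
      by (rule Il_mono) (use g12 h2 in \<open>meson order_trans\<close>)
    moreover have "Il \<Omega> \<Omega> (Il \<Omega> \<Omega> (Su \<Omega> \<Omega> a)) x \<le> Il \<Omega> \<Omega> (\<lambda>y. fst (g y)) x"
      by (rule Il_mono) (use h1 in auto)
    moreover have "Su \<Omega> \<Omega> (\<lambda>y. snd (g y)) x \<le> Su \<Omega> \<Omega> (Su \<Omega> \<Omega> a) x"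
      by (rule Su_mono) (use h2 in auto)
    moreover have "Su \<Omega> \<Omega> (Il \<Omega> \<Omega> (Su \<Omega> \<Omega> a)) x \<le> Su \<Omega> \<Omega> (\<lambda>y. snd (g y)) x"
      by (rule Su_mono) (use g12 h1 in \<open>meson order_trans\<close>)
    ultimately show "Fenv \<Omega> \<Omega> g x = (Il \<Omega> \<Omega> (Su \<Omega> \<Omega> a) x, Su \<Omega> \<Omega> (Su \<Omega> \<Omega> a) x)"
      using Fenv_eq[OF g, of \<Omega> x] Il_idem[OF x, of \<Omega> "Su \<Omega> \<Omega> a"] Su_idem[OF x, of \<Omega> a] SISa[OF x]
      by (simp add: antisym)
  qed
  have P4: "H_continuous \<Omega> (Fenv \<Omega> \<Omega> (deg (Il \<Omega> \<Omega> b)))"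
    unfolding H_continuous_def Fenv_deg
  proof (intro conjI ballI impI)
    show "(\<lambda>x. (Il \<Omega> \<Omega> (Il \<Omega> \<Omega> b) x, Su \<Omega> \<Omega> (Il \<Omega> \<Omega> b) x)) \<in> IA \<Omega>"
      unfolding IA_def using IleS by auto
    fix g x assume g: "g \<in> IA \<Omega>" and
      h: "\<forall>x\<in>\<Omega>. fst (Il \<Omega> \<Omega> (Il \<Omega> \<Omega> b) x, Su \<Omega> \<Omega> (Il \<Omega> \<Omega> b) x) \<le> fst (g x) \<and>
           snd (g x) \<le> snd (Il \<Omega> \<Omega> (Il \<Omega> \<Omega> b) x, Su \<Omega> \<Omega> (Il \<Omega> \<Omega> b) x)"
      and x: "x \<in> \<Omega>"
    have g12: "fst (g y) \<le> snd (g y)" if "y \<in> \<Omega>" for y using g that by (simp add: IA_def)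
    have h1: "Il \<Omega> \<Omega> b y \<le> fst (g y)" if "y \<in> \<Omega>" for y using h[rule_format, OF that] Il_idem[OF that, of \<Omega> b] by simp
    have h2: "snd (g y) \<le> Su \<Omega> \<Omega> (Il \<Omega> \<Omega> b) y" if "y \<in> \<Omega>" for y using h that by simp
    have "Il \<Omega> \<Omega> (\<lambda>y. fst (g y)) x \<le> Il \<Omega> \<Omega> (Su \<Omega> \<Omega> (Il \<Omega> \<Omega> b)) x"
      by (rule Il_mono) (use g12 h2 in \<open>meson order_trans\<close>)
    moreover have "Il \<Omega> \<Omega> (Il \<Omega> \<Omega> b) x \<le> Il \<Omega> \<Omega> (\<lambda>y. fst (g y)) x"
      by (rule Il_mono) (use h1 in auto)
    moreover have "Su \<Omega> \<Omega> (\<lambda>y. snd (g y)) x \<le> Su \<Omega> \<Omega> (Su \<Omega> \<Omega> (Il \<Omega> \<Omega> b)) x"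
      by (rule Su_mono) (use h2 in auto)
    moreover have "Su \<Omega> \<Omega> (Il \<Omega> \<Omega> b) x \<le> Su \<Omega> \<Omega> (\<lambda>y. snd (g y)) x"
      by (rule Su_mono) (use g12 h1 in \<open>meson order_trans\<close>)
    ultimately show "Fenv \<Omega> \<Omega> g x = (Il \<Omega> \<Omega> (Il \<Omega> \<Omega> b) x, Su \<Omega> \<Omega> (Il \<Omega> \<Omega> b) x)"
      using Fenv_eq[OF g, of \<Omega> x] Il_idem[OF x, of \<Omega> b] Su_idem[OF x, of \<Omega> "Il \<Omega> \<Omega> b"] ISIb[OF x]
      by (simp add: antisym)
  qed
  have P5: "ile \<Omega> (Fenv \<Omega> \<Omega> (deg (Su \<Omega> \<Omega> a))) (Fenv \<Omega> \<Omega> (deg (Il \<Omega> \<Omega> b)))"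
    unfolding ile_def Fenv_deg
    using ISa_le_Ib Sa_le_SIb Il_idem[of _ \<Omega> \<Omega> b] Su_idem[of _ \<Omega> \<Omega> a] by simp
  show ?thesis
    using P1 P2 P3 P4 P5 by (simp add: Ia Sb Ilow_deg Supp_deg)
qed

end
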